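(* Let $q$ be an odd prime power and let $f(X)\in\mathbb{F}_q[X]$ permute $\mathbb{F}_q$. Then there is no $a\in\mathbb{F}_q$ for which $g_a(X):=\frac{f(X+a)-f(a)}{X}$ permutes $\mathbb{F}_q$. *)

theory Defs
  imports "HOL-Computational_Algebra.Polynomial"
begin

definition permutes_field :: "'a::{finite,field} poly \<Rightarrow> bool" where
  "permutes_field p \<longleftrightarrow> bij (poly p)"

end

theory Submission
  imports Defs
begin

lemma inv_pairs_prod:
  fixes A :: "'a::field set"
  assumes "finite A" "\<forall>x\<in>A. x \<noteq> 0 \<and> inverse x \<in> A \<and> inverse x \<noteq> x"
  shows "prod id A = 1"
  using assms
proof (induction "card A" arbitrary: A rule: less_induct)
  case less
  show ?case
  proof (cases "A = {}")
    case True then show ?thesis by simp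
  next
    case False
    then obtain x where x: "x \<in> A" by blast
    let ?B = "A - {x, inverse x}"
    have xi: "inverse x \<in> A" "inverse x \<noteq> x" "x \<noteq> 0" using less.prems x by auto
    have cB: "card ?B < card A"
      using less.prems(1) x by (intro psubset_card_mono) auto
    have B: "\<forall>y\<in>?B. y \<noteq> 0 \<and> inverse y \<in> ?B \<and> inverse y \<noteq> y"
      using less.prems(2) by (auto simp: inverse_eq_iff_eq)
    have pB: "prod id ?B = 1" using less.hyps[OF cB _ B] less.prems(1) by simp
    have "A = insert x (insert (inverse x) ?B)" using x xi by auto
    then have "prod id A = prod id (insert x (insert (inverse x) ?B))" by simp
    also have "\<dots> = x * inverse x * prod id ?B"
      using less.prems(1) xi by (simp add: mult.assoc)
    finally show ?thesis using pB xi by simp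
  qed
qed

lemma wilson_field:
  assumes "(1::'a::{finite,field}) \<noteq> -1"
  shows "prod id (UNIV - {0::'a}) = -1"
proof -
  let ?S = "UNIV - {0::'a, 1, -1}"
  have S: "\<forall>x\<in>?S. x \<noteq> 0 \<and> inverse x \<in> ?S \<and> inverse x \<noteq> x"
  proof
    fix x assume x: "x \<in> ?S"
    have "inverse x \<noteq> x"
    proof
      assume "inverse x = x"
      then have "x * x = 1" using x by (metis DiffE insertCI right_inverse)
      then have "x^2 = 1" by (simp add: power2_eq_square)
      then show False using x by (auto simp: power2_eq_1_iff)
    qed
    moreover have "inverse x \<in> ?S" using x by (auto simp: inverse_eq_iff_eq)
      (metis inverse_minus_eq inverse_1 inverse_inverse_eq)+
    ultimately show "x \<noteq> 0 \<and> inverse x \<in> ?S \<and> inverse x \<noteq> x" using x by auto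
  qed
  have 1: "prod id ?S = 1" using inv_pairs_prod[OF _ S] by simp
  have "UNIV - {0::'a} = insert 1 (insert (-1) ?S)" by auto
  then have "prod id (UNIV - {0::'a}) = prod id (insert 1 (insert (-1) ?S))" by simp
  also have "\<dots> = -1 * prod id ?S" using assms by simp
  finally show ?thesis using 1 by simp
qed

lemma char_not_2:
  assumes "odd (card (UNIV :: 'a::{finite,field} set))"
  shows "(1::'a) \<noteq> -1"
proof
  assume h: "(1::'a) = -1"
  have "sum (\<lambda>x::'a. x + 1) UNIV = sum id UNIV"
    by (rule sum.reindex_bij_witness[where i="\<lambda>x. x - 1" and j="\<lambda>x. x + 1"]) auto
  then have "of_nat (card (UNIV::'a set)) = (0::'a)"
    by (simp add: sum.distrib)
  moreover obtain k where "card (UNIV::'a set) = 2*k+1" using assms oddE by blast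
  moreover have "(2::'a) = 0" using h by (metis add_eq_0_iff one_add_one)
  ultimately show False by simp
qed

theorem proposition6p1:
  fixes f :: "'a::{finite,field} poly"
  assumes "odd (card (UNIV :: 'a set))"
    and "permutes_field f"
  shows "\<not> (\<exists>a::'a. permutes_field
            ((pcompose f [:a, 1:] - [:poly f a:]) div [:0, 1:]))"
proof
  assume "\<exists>a::'a. permutes_field ((pcompose f [:a, 1:] - [:poly f a:]) div [:0, 1:])"
  then obtain a where ga: "permutes_field ((pcompose f [:a, 1:] - [:poly f a:]) div [:0, 1:])" by blast
  define h where "h = pcompose f [:a, 1:] - [:poly f a:]"
  define g where "g = h div [:0, 1:]"
  have bg: "bij (poly g)" using ga unfolding g_def h_def permutes_field_def by simp
  have injf: "inj (poly f)" using assms(2) unfolding permutes_field_def bij_def by simp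
  have ph: "poly h x = poly f (a + x) - poly f a" for x
    unfolding h_def by (simp add: poly_pcompose)
  have injh: "inj (poly h)"
    by (rule injI) (use injf in \<open>auto simp: ph dest: injD\<close>)
  have h0: "poly h 0 = 0" by (simp add: ph)
  have "[:0, 1:] dvd h" using h0 dvd_iff_poly_eq_0[of 0 h] by simp
  then have hg: "h = [:0, 1:] * g" unfolding g_def by (rule dvd_mult_div_cancel[symmetric])
  have phg: "poly h x = x * poly g x" for x by (subst hg) simp
  have g0: "poly g 0 = 0"
  proof -
    obtain x0 where x0: "poly g x0 = 0" using bg by (metis bij_pointE)
    then have "poly h x0 = poly h 0" by (simp add: phg h0)
    then have "x0 = 0" using injh by (simp add: inj_eq)
    then show ?thesis using x0 by simp
  qed
  have injg: "inj (poly g)" using bg bij_def by blast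
  have bijh: "bij (poly h)" using injh by (simp add: bij_def finite_UNIV_inj_surj)
  have bb: "bij_betw p (UNIV - {0::'a}) (UNIV - {0})" if "bij p" "p 0 = 0" for p :: "'a \<Rightarrow> 'a"
    by (rule bij_betw_DiffI) (use that in auto)
  let ?N = "UNIV - {0::'a}"
  have Ph: "prod (poly h) ?N = prod id ?N"
    using prod.reindex_bij_betw[OF bb[OF bijh h0], of id] by simp
  have Pg: "prod (poly g) ?N = prod id ?N"
    using prod.reindex_bij_betw[OF bb[OF bg g0], of id] by simp
  have "prod (poly h) ?N = prod id ?N * prod (poly g) ?N"
    by (simp add: phg prod.distrib)
  then have eq: "prod id ?N = prod id ?N * prod id ?N" using Ph Pg by simp
  have ne: "(1::'a) \<noteq> -1" using char_not_2[OF assms(1)] .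
  have "prod id ?N = (-1::'a)" using wilson_field[OF ne] .
  then show False using eq ne by simp
qed

end
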